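(* Suppose $0<\lambda\le\frac12$ and $\tau>0$. There exists a universal constant $c_0\in(0,1)$ such that the following holds. Let $\mu=\frac{c_0\lambda}{\tau}$ and let $p_0:\mathbb{R}\to[0,\infty)$ be the probability density $p_0(x)=\frac\tau4$ for $|x|\le\frac1\tau$ and $p_0(x)=\frac{1}{4\tau x^2}$ for $|x|>\frac1\tau$. Let $h:\mathbb{R}\to\mathbb{C}$ be the purely imaginary function $$h(t)=\begin{cases}0,&t<-2\tau,\\-j(-t),&-2\tau\le t\le-\tau,\\ k(t),&-\tau<t<\tau,\\ j(t),&\tau\le t\le2\tau,\\0,&t>2\tau,\end{cases}$$ with $k(t)=2i\frac{1-\lambda}{\lambda}\sin(t\mu)$ and $j(t)=2i\frac{1-\lambda}{\lambda}\sin(\tau\mu)\frac{2\tau-t}{\tau}$. Define the real-valued function $\Delta=-\frac{\hat h}{2\pi}$, where $\hat h(x)=\int e^{-itx}h(t)\,dt$. Then $p_1=p_0+\Delta$ is a probability density function. *)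

theory Defs
  imports "HOL-Analysis.Analysis"
begin

definition p0 :: "real \<Rightarrow> real \<Rightarrow> real" where
  "p0 \<tau> x = (if \<bar>x\<bar> \<le> 1 / \<tau> then \<tau> / 4 else 1 / (4 * \<tau> * x\<^sup>2))"

definition kfun :: "real \<Rightarrow> real \<Rightarrow> real \<Rightarrow> real \<Rightarrow> complex" where
  "kfun lam \<mu> \<tau> t = 2 * \<i> * of_real ((1 - lam) / lam) * of_real (sin (t * \<mu>))"

definition jfun :: "real \<Rightarrow> real \<Rightarrow> real \<Rightarrow> real \<Rightarrow> complex" where
  "jfun lam \<mu> \<tau> t = 2 * \<i> * of_real ((1 - lam) / lam) * of_real (sin (\<tau> * \<mu>))
       * of_real ((2 * \<tau> - t) / \<tau>)"

definition hfun :: "real \<Rightarrow> real \<Rightarrow> real \<Rightarrow> real \<Rightarrow> complex" where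
  "hfun lam \<mu> \<tau> t =
     (if t < - 2 * \<tau> then 0
      else if t \<le> - \<tau> then - jfun lam \<mu> \<tau> (- t)
      else if t < \<tau> then kfun lam \<mu> \<tau> t
      else if t \<le> 2 * \<tau> then jfun lam \<mu> \<tau> t
      else 0)"

definition fourier :: "(real \<Rightarrow> complex) \<Rightarrow> real \<Rightarrow> complex" where
  "fourier h x = (LINT t|lborel. exp (- \<i> * of_real (t * x)) * h t)"

definition Delta :: "real \<Rightarrow> real \<Rightarrow> real \<Rightarrow> real \<Rightarrow> complex" where
  "Delta lam \<mu> \<tau> x = - fourier (hfun lam \<mu> \<tau>) x / (2 * of_real pi)"

definition is_prob_density :: "(real \<Rightarrow> real) \<Rightarrow> bool" where
  "is_prob_density p \<longleftrightarrow> (\<forall>x. 0 \<le> p x) \<and> integrable lborel p \<and> (LINT x|lborel. p x) = 1"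

end

theory Submission
  imports Defs
begin


lemma p0_meas[measurable]: "p0 \<tau> \<in> borel_measurable borel"
  unfolding p0_def by measurable

lemma p0_nonneg: "0 < \<tau> \<Longrightarrow> 0 \<le> p0 \<tau> x"
  unfolding p0_def by auto

lemma p0_has_integral:
  assumes t: "0 < \<tau>"
  shows "(p0 \<tau> has_integral 1) UNIV"
proof -
  define a where "a = 1 / \<tau>"
  have a: "a > 0" using t by (simp add: a_def)
  have r1: "((\<lambda>x. 1 / x ^ 2) has_integral 1 / a) {a..}"
    using has_integral_inverse_power_to_inf[of 2 a] a by simp
  have r1': "((\<lambda>x. 1/(4*\<tau>) * (1 / x ^ 2)) has_integral (1/(4*\<tau>)) * (1 / a)) {a..}"
    using has_integral_mult_right[OF r1] .
  have R: "(p0 \<tau> has_integral 1/4) {a..}"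
  proof -
    have "(1/(4*\<tau>)) * (1 / a) = 1/4" using t by (simp add: a_def)
    moreover have "\<And>x. x \<in> {a..} \<Longrightarrow> 1/(4*\<tau>) * (1 / x ^ 2) = p0 \<tau> x"
    proof -
      fix x assume "x \<in> {a..}"
      then have xa: "x \<ge> a" by simp
      show "1/(4*\<tau>) * (1 / x ^ 2) = p0 \<tau> x"
      proof (cases "x = a")
        case True
        have e1: "p0 \<tau> x = \<tau>/4" using True t by (simp add: p0_def a_def)
        have e2: "1/(4*\<tau>) * (1 / x ^ 2) = \<tau>/4" using True t by (simp add: a_def power2_eq_square)
        show ?thesis using e1 e2 by simp
      next
        case False then have "x > a" using xa by simp
        then have "\<not> \<bar>x\<bar> \<le> 1/\<tau>" using a by (simp add: a_def)
        then show ?thesis using t by (simp add: p0_def power2_eq_square field_simps)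
      qed
    qed
    ultimately show ?thesis using r1' by (metis (no_types, lifting) has_integral_cong)
  qed
  have L: "(p0 \<tau> has_integral 1/4) {..-a}"
  proof -
    have "p0 \<tau> absolutely_integrable_on {a..} \<and> integral {a..} (p0 \<tau>) = 1/4"
      using R nonnegative_absolutely_integrable_1[of "p0 \<tau>" "{a..}"] p0_nonneg[OF t]
      by (auto simp: has_integral_iff)
    then have "(\<lambda>x. p0 \<tau> (-x)) absolutely_integrable_on {..-a} \<and> integral {..-a} (\<lambda>x. p0 \<tau> (-x)) = 1/4"
      by (subst has_absolute_integral_reflect_real) auto
    moreover have "(\<lambda>x. p0 \<tau> (-x)) = p0 \<tau>" by (auto simp: p0_def)
    ultimately show ?thesis
      by (metis absolutely_integrable_on_def has_integral_integrable_integral)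
  qed
  have M: "(p0 \<tau> has_integral 1/2) {-a..a}"
  proof -
    have "((\<lambda>x. \<tau>/4) has_integral (\<tau>/4) * (a - (-a))) {-a..a}"
      using has_integral_const_real[of "\<tau>/4" "-a" a] a by simp
    moreover have "(\<tau>/4) * (a - (-a)) = 1/2" using t by (simp add: a_def)
    moreover have "\<And>x. x \<in> {-a..a} \<Longrightarrow> \<tau>/4 = p0 \<tau> x"
      by (auto simp: p0_def a_def)
    ultimately show ?thesis by (metis (no_types, lifting) has_integral_cong)
  qed
  have LM: "(p0 \<tau> has_integral 1/4 + 1/2) ({..-a} \<union> {-a..a})"
    by (rule has_integral_Un[OF L M]) (auto intro: negligible_subset[of "{-a}"])
  have "(p0 \<tau> has_integral (1/4 + 1/2) + 1/4) (({..-a} \<union> {-a..a}) \<union> {a..})"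
    by (rule has_integral_Un[OF LM R]) (use a in \<open>auto intro: negligible_subset[of "{a}"]\<close>)
  moreover have "({..-a} \<union> {-a..a}) \<union> {a..} = UNIV" by auto
  ultimately show ?thesis by simp
qed

lemma p0_bochner: "0 < \<tau> \<Longrightarrow> has_bochner_integral lborel (p0 \<tau>) 1"
  apply (rule has_bochner_integral_nn_integral)
     apply simp
  using p0_nonneg apply blast
   apply simp
  using nn_integral_has_integral_lborel[OF p0_meas p0_nonneg p0_has_integral] by simp



definition gf :: "real \<Rightarrow> real \<Rightarrow> real \<Rightarrow> real \<Rightarrow> real" where
  "gf lam \<mu> \<tau> t =
     (if t < - 2 * \<tau> then 0
      else if t \<le> - \<tau> then - (2 * ((1 - lam) / lam) * sin (\<tau> * \<mu>) * ((2 * \<tau> + t) / \<tau>))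
      else if t < \<tau> then 2 * ((1 - lam) / lam) * sin (t * \<mu>)
      else if t \<le> 2 * \<tau> then 2 * ((1 - lam) / lam) * sin (\<tau> * \<mu>) * ((2 * \<tau> - t) / \<tau>)
      else 0)"

lemma gf_meas[measurable]: "gf lam \<mu> \<tau> \<in> borel_measurable borel"
  unfolding gf_def by measurable

lemma hfun_gf: "hfun lam \<mu> \<tau> t = \<i> * complex_of_real (gf lam \<mu> \<tau> t)"
  unfolding hfun_def gf_def kfun_def jfun_def by (auto simp: field_simps)

lemma gf_odd: "0 < \<tau> \<Longrightarrow> gf lam \<mu> \<tau> (-t) = - gf lam \<mu> \<tau> t"
  unfolding gf_def by (auto simp: algebra_simps diff_divide_distrib)

lemma gf_zero: "0 < \<tau> \<Longrightarrow> t \<notin> {-2*\<tau>..2*\<tau>} \<Longrightarrow> gf lam \<mu> \<tau> t = 0"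
  unfolding gf_def by auto

lemma gf_bound:
  assumes t: "0 < \<tau>" and m: "0 \<le> \<mu>" and l: "0 < lam" "lam \<le> 1"
  shows "\<bar>gf lam \<mu> \<tau> t\<bar> \<le> 2 * ((1 - lam) / lam) * (\<tau> * \<mu>)"
proof -
  define A where "A = 2 * ((1 - lam) / lam)"
  have A: "0 \<le> A" using l by (simp add: A_def)
  have s: "\<bar>sin (\<tau> * \<mu>)\<bar> \<le> \<tau> * \<mu>"
    using abs_sin_x_le_abs_x[of "\<tau>*\<mu>"] t m by simp
  have main: "\<bar>gf lam \<mu> \<tau> t\<bar> \<le> A * (\<tau> * \<mu>)"
  proof (cases "t < -2*\<tau> \<or> t > 2*\<tau>")
    case True then have "gf lam \<mu> \<tau> t = 0" by (auto simp: gf_def)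
    then show ?thesis using t m A by simp
  next
    case False
    show ?thesis
    proof (cases "\<bar>t\<bar> < \<tau>")
      case True
      then have "\<bar>sin (t*\<mu>)\<bar> \<le> \<tau> * \<mu>"
      proof -
        have "\<bar>t\<bar> * \<mu> \<le> \<tau> * \<mu>" using True m by (intro mult_right_mono) auto
        then show ?thesis using abs_sin_x_le_abs_x[of "t*\<mu>"] m by (simp add: abs_mult)
      qed
      then have "\<bar>A * sin (t*\<mu>)\<bar> \<le> A * (\<tau> * \<mu>)" using A by (simp add: abs_mult mult_left_mono)
      then show ?thesis using True unfolding gf_def A_def by auto
    next
      case F2: False
      have q: "\<bar>(2 * \<tau> - \<bar>t\<bar>) / \<tau>\<bar> \<le> 1" using False F2 t by (auto simp: abs_le_iff field_simps)
      have "\<bar>A * sin (\<tau> * \<mu>) * ((2 * \<tau> - \<bar>t\<bar>) / \<tau>)\<bar> \<le> A * (\<tau> * \<mu>) * 1"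
        unfolding abs_mult using A s q
        by (intro mult_mono) (auto intro: mult_left_mono)
      moreover have "\<bar>gf lam \<mu> \<tau> t\<bar> = \<bar>A * sin (\<tau> * \<mu>) * ((2 * \<tau> - \<bar>t\<bar>) / \<tau>)\<bar>"
        using False F2 t unfolding gf_def A_def by (auto simp: abs_mult)
      ultimately show ?thesis by simp
    qed
  qed
  then show ?thesis by (simp add: A_def)
qed



definition Gf :: "real \<Rightarrow> real \<Rightarrow> real \<Rightarrow> real \<Rightarrow> real" where
  "Gf lam \<mu> \<tau> x = (LINT t|lborel. gf lam \<mu> \<tau> t * sin (t * x))"

lemma int_box: "integrable lborel (\<lambda>t::real. indicator {a..b} t *\<^sub>R (B::real))"
  using borel_integrable_atLeastAtMost'[of a b "\<lambda>_. B"] unfolding set_integrable_def by simp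

lemma gsin_integrable:
  assumes t: "0 < \<tau>" and m: "0 \<le> \<mu>" and l: "0 < lam" "lam \<le> 1"
  shows "integrable lborel (\<lambda>t. gf lam \<mu> \<tau> t * sin (t * x))"
proof (rule Bochner_Integration.integrable_bound[OF int_box[of "-2*\<tau>" "2*\<tau>" "2 * ((1 - lam) / lam) * (\<tau> * \<mu>)"]])
  show "(\<lambda>t. gf lam \<mu> \<tau> t * sin (t * x)) \<in> borel_measurable lborel" by measurable
  have B: "0 \<le> 2 * ((1 - lam) / lam) * (\<tau> * \<mu>)" using t m l by auto
  show "AE t in lborel. norm (gf lam \<mu> \<tau> t * sin (t * x)) \<le> norm (indicator {-2*\<tau>..2*\<tau>} t *\<^sub>R (2 * ((1 - lam) / lam) * (\<tau> * \<mu>)))"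
  proof (rule AE_I2)
    fix t
    have "\<bar>gf lam \<mu> \<tau> t * sin (t * x)\<bar> \<le> \<bar>gf lam \<mu> \<tau> t\<bar> * 1"
      unfolding abs_mult by (intro mult_left_mono) auto
    then show "norm (gf lam \<mu> \<tau> t * sin (t * x)) \<le> norm (indicator {-2*\<tau>..2*\<tau>} t *\<^sub>R (2 * ((1 - lam) / lam) * (\<tau> * \<mu>)))"
      using gf_bound[OF t m l, of t] gf_zero[OF t, of t lam \<mu>] B
      by (auto simp: indicator_def simp del: abs_divide abs_mult)
  qed
qed

lemma exp_pair: "exp (- \<i> * complex_of_real (t * x)) * (\<i> * complex_of_real g) +
   exp (- \<i> * complex_of_real ((-t) * x)) * (\<i> * complex_of_real (-g)) = complex_of_real (2 * (g * sin (t * x)))"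
  by (simp add: complex_eq_iff Re_exp Im_exp)

lemma fourier_eq:
  assumes t: "0 < \<tau>" and m: "0 \<le> \<mu>" and l: "0 < lam" "lam \<le> 1"
  shows "fourier (hfun lam \<mu> \<tau>) x = complex_of_real (Gf lam \<mu> \<tau> x)"
proof -
  define F where "F = (\<lambda>t. exp (- \<i> * complex_of_real (t * x)) * (\<i> * complex_of_real (gf lam \<mu> \<tau> t)))"
  have four: "fourier (hfun lam \<mu> \<tau>) x = (LINT t|lborel. F t)"
    unfolding fourier_def F_def hfun_gf ..
  define B where "B = 2 * ((1 - lam) / lam) * (\<tau> * \<mu>)"
  have Fi: "integrable lborel F"
  proof (rule Bochner_Integration.integrable_bound[OF int_box[of "-2*\<tau>" "2*\<tau>" B]])
    show "F \<in> borel_measurable lborel" unfolding F_def by measurable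
    have B: "0 \<le> B" using t m l by (auto simp: B_def)
    show "AE t in lborel. norm (F t) \<le> norm (indicator {-2*\<tau>..2*\<tau>} t *\<^sub>R B)"
    proof (rule AE_I2)
      fix t
      have "norm (F t) = \<bar>gf lam \<mu> \<tau> t\<bar>"
        unfolding F_def norm_mult by (simp add: norm_exp)
      moreover have "\<bar>gf lam \<mu> \<tau> t\<bar> \<le> B" using gf_bound[OF t m l, of t] by (simp add: B_def)
      ultimately show "norm (F t) \<le> norm (indicator {-2*\<tau>..2*\<tau>} t *\<^sub>R B)"
        using gf_zero[OF t, of t lam \<mu>] B
        by (auto simp: indicator_def)
    qed
  qed
  have Fr: "integrable lborel (\<lambda>t. F (-t))"
    using lborel_integrable_real_affine[OF Fi, of "-1" 0] by simp
  have e1: "(LINT t|lborel. F t) = (LINT t|lborel. F (-t))"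
    using lborel_integral_real_affine[of "-1" F 0] by simp
  have pw: "F t + F (-t) = complex_of_real (2 * (gf lam \<mu> \<tau> t * sin (t * x)))" for t
    unfolding F_def gf_odd[OF t] using exp_pair by simp
  have "(LINT t|lborel. F t) + (LINT t|lborel. F (-t)) = (LINT t|lborel. F t + F (-t))"
    using Fi Fr by simp
  also have "\<dots> = complex_of_real (2 * Gf lam \<mu> \<tau> x)"
    unfolding pw Gf_def integral_complex_of_real[symmetric] by (simp del: of_real_mult)
  finally have "2 * (LINT t|lborel. F t) = complex_of_real (2 * Gf lam \<mu> \<tau> x)"
    using e1 by simp
  then show ?thesis using four by simp
qed



lemma frac_bound:
  fixes N D P D' :: real
  assumes "\<bar>N\<bar> \<le> P" "0 < D'" "D' \<le> \<bar>D\<bar>"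
  shows "\<bar>N / D\<bar> \<le> P / D'"
proof -
  have "\<bar>N / D\<bar> = \<bar>N\<bar> / \<bar>D\<bar>" by simp
  also have "\<dots> \<le> P / D'"
    using assms by (intro frac_le) auto
  finally show ?thesis .
qed

lemma alg_id:
  fixes x \<mu> \<tau> S C c q S2 :: real
  assumes x0: "x \<noteq> 0" and xm1: "x - \<mu> \<noteq> 0" and xm2: "x + \<mu> \<noteq> 0"
  shows "(S*c - C*q)/(x-\<mu>) - (S*c + C*q)/(x+\<mu>) + 2*q*C/x
     = (2*\<mu>*S*c)/((x-\<mu>)*(x+\<mu>)) - (2*q*C*\<mu>^2)/(x*((x-\<mu>)*(x+\<mu>)))"
proof -
  define P where "P = (x-\<mu>)*(x+\<mu>)"
  have P: "P \<noteq> 0" using xm1 xm2 by (simp add: P_def)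
  have a: "(S*c - C*q)/(x-\<mu>) - (S*c + C*q)/(x+\<mu>) = ((S*c - C*q)*(x+\<mu>) - (S*c + C*q)*(x-\<mu>))/P"
    using xm1 xm2 unfolding P_def by (simp add: diff_divide_distrib)
  have b: "((S*c - C*q)*(x+\<mu>) - (S*c + C*q)*(x-\<mu>)) = 2*\<mu>*S*c - 2*x*C*q" by algebra
  have c: "(2*\<mu>*S*c - 2*x*C*q)/P + 2*q*C/x = (x*(2*\<mu>*S*c - 2*x*C*q) + 2*q*C*P)/(x*P)"
    using x0 P by (simp add: add_divide_distrib)
  have d: "x*(2*\<mu>*S*c - 2*x*C*q) + 2*q*C*P = x*(2*\<mu>*S*c) - 2*q*C*\<mu>^2"
    unfolding P_def by (simp add: power2_eq_square algebra_simps)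
  have e: "(x*(2*\<mu>*S*c) - 2*q*C*\<mu>^2)/(x*P) = (2*\<mu>*S*c)/P - (2*q*C*\<mu>^2)/(x*P)"
    using x0 P by (simp add: diff_divide_distrib)
  show ?thesis using a b c d e unfolding P_def by simp
qed

lemma comb:
  fixes a b e K A B E :: real
  assumes "\<bar>a\<bar> \<le> A" "A = K" "\<bar>b\<bar> \<le> B" "B \<le> K" "\<bar>e\<bar> \<le> E" "E = K"
  shows "\<bar>a - b + e\<bar> \<le> 3*K"
  using assms by linarith

lemma bound_alg:
  fixes x \<mu> \<tau> S C c q S2 :: real
  assumes t: "0 < \<tau>" and m: "0 \<le> \<mu>" and tm: "\<tau> * \<mu> \<le> 1/100" and xt: "1 < \<bar>x\<bar> * \<tau>"
    and bS: "\<bar>S\<bar> \<le> 1" and bC: "\<bar>C\<bar> \<le> 1" and bc: "\<bar>c\<bar> \<le> 1" and bS2: "\<bar>S2\<bar> \<le> 1"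
    and bs: "\<bar>q\<bar> \<le> \<tau> * \<mu>"
  shows "\<bar>(S*c - C*q)/(x-\<mu>) - (S*c + C*q)/(x+\<mu>) + 2*q*C/x + 2*q*(S-S2)/(\<tau>*x^2)\<bar> \<le> 12*\<mu>/x^2"
proof -
  have x0: "x \<noteq> 0" using xt by auto
  have ax: "0 < \<bar>x\<bar>" using x0 by simp
  have mx: "100 * \<mu> < \<bar>x\<bar>"
  proof -
    have "100 * \<mu> * \<tau> \<le> 1" using tm by (simp add: algebra_simps)
    also have "\<dots> < \<bar>x\<bar> * \<tau>" by (rule xt)
    finally show ?thesis using t by simp
  qed
  have mx2: "\<mu> < \<bar>x\<bar>" using mx m by simp
  have mu2: "\<mu>^2 \<le> x^2/2"
  proof -
    have "\<mu>^2 \<le> \<bar>x\<bar>^2" using mx2 m by (intro power_mono) auto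
    moreover have "100 * \<mu>^2 \<le> \<bar>x\<bar> * \<mu>" using mx m unfolding power2_eq_square
      by (metis mult.assoc mult_right_mono less_imp_le)
    moreover have "\<bar>x\<bar> * \<mu> \<le> \<bar>x\<bar> * \<bar>x\<bar>" using mx2 m by (intro mult_left_mono) auto
    ultimately show ?thesis by (simp add: power2_eq_square)
  qed
  have xm1: "x - \<mu> \<noteq> 0" using mx2 m by auto
  have xm2: "x + \<mu> \<noteq> 0" using mx2 m by auto
  have x2: "0 < x^2" using x0 by simp
  have D: "x^2/2 \<le> x^2 - \<mu>^2" using mu2 by simp
  have d: "x^2 - \<mu>^2 = (x-\<mu>)*(x+\<mu>)" by (simp add: power2_eq_square algebra_simps)
  have eq0: "(S*c - C*q)/(x-\<mu>) - (S*c + C*q)/(x+\<mu>) + 2*q*C/x + 2*q*(S-S2)/(\<tau>*x^2)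
     = (2*\<mu>*S*c)/((x-\<mu>)*(x+\<mu>)) - (2*q*C*\<mu>^2)/(x*((x-\<mu>)*(x+\<mu>))) + (2*q*(S-S2))/(\<tau>*x^2)"
    using alg_id[OF x0 xm1 xm2, of S c C q] by simp
  have eq: "(S*c - C*q)/(x-\<mu>) - (S*c + C*q)/(x+\<mu>) + 2*q*C/x + 2*q*(S-S2)/(\<tau>*x^2)
     = (2*\<mu>*S*c)/(x^2-\<mu>^2) - (2*q*C*\<mu>^2)/(x*(x^2-\<mu>^2)) + (2*q*(S-S2))/(\<tau>*x^2)"
    unfolding eq0 d ..
  have Dp: "\<bar>x^2-\<mu>^2\<bar> = x^2-\<mu>^2" using D x2 by (intro abs_of_nonneg) linarith
  have T1: "\<bar>(2*\<mu>*S*c)/(x^2-\<mu>^2)\<bar> \<le> (2*\<mu>)/(x^2/2)"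
  proof (rule frac_bound)
    have "\<bar>S*c\<bar> \<le> 1" using bS bc by (simp add: abs_mult mult_le_one)
    then show "\<bar>2*\<mu>*S*c\<bar> \<le> 2*\<mu>" using m
      by (simp add: abs_mult mult.assoc mult_left_le)
    show "0 < x^2/2" using x2 by simp
    show "x^2/2 \<le> \<bar>x^2-\<mu>^2\<bar>" using D Dp by simp
  qed
  have T2: "\<bar>(2*q*C*\<mu>^2)/(x*(x^2-\<mu>^2))\<bar> \<le> (2*(\<tau>*\<mu>)*\<mu>^2)/(\<bar>x\<bar>*(x^2/2))"
  proof (rule frac_bound)
    have "\<bar>q*C\<bar> \<le> \<tau>*\<mu>" using bs bC by (simp add: abs_mult mult_le_one) (metis abs_ge_zero mult_left_le mult_mono' order.trans zero_le_one)
    then have "\<bar>q*C\<bar> * \<mu>^2 \<le> (\<tau>*\<mu>) * \<mu>^2" by (intro mult_right_mono) auto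
    then show "\<bar>2*q*C*\<mu>^2\<bar> \<le> 2*(\<tau>*\<mu>)*\<mu>^2"
      by (simp add: abs_mult)
    show "0 < \<bar>x\<bar>*(x^2/2)" using x2 ax by simp
    show "\<bar>x\<bar>*(x^2/2) \<le> \<bar>x*(x^2-\<mu>^2)\<bar>" using D ax Dp by (simp add: abs_mult mult_left_mono)
  qed
  have T2': "(2*(\<tau>*\<mu>)*\<mu>^2)/(\<bar>x\<bar>*(x^2/2)) \<le> 4*\<mu>/x^2"
  proof -
    have "\<tau> * \<mu> * \<mu> \<le> \<bar>x\<bar>"
    proof -
      have "\<tau> * \<mu> * \<mu> \<le> 1 * \<mu>" using tm m by (intro mult_right_mono) auto
      then show ?thesis using mx2 by simp
    qed
    then have "(2*(\<tau>*\<mu>)*\<mu>^2) \<le> 2 * \<bar>x\<bar> * \<mu>" using m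
      by (simp add: power2_eq_square) (metis mult.assoc mult.commute mult_left_mono)
    then show ?thesis using ax x2 by (simp add: field_simps)
  qed
  have T3: "\<bar>(2*q*(S-S2))/(\<tau>*x^2)\<bar> \<le> (4*(\<tau>*\<mu>))/(\<tau>*x^2)"
  proof (rule frac_bound)
    have "\<bar>S-S2\<bar> \<le> 2" using bS bS2 by linarith
    then have "\<bar>q\<bar>*\<bar>S-S2\<bar> \<le> (\<tau>*\<mu>)*2" using bs by (intro mult_mono) auto
    moreover have "\<bar>2*q*(S-S2)\<bar> = 2 * (\<bar>q\<bar>*\<bar>S-S2\<bar>)" by (simp add: abs_mult)
    ultimately show "\<bar>2*q*(S-S2)\<bar> \<le> 4*(\<tau>*\<mu>)" by linarith
    show "0 < \<tau>*x^2" using t x2 by simp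
    show "\<tau>*x^2 \<le> \<bar>\<tau>*x^2\<bar>" by simp
  qed
  have T3': "(4*(\<tau>*\<mu>))/(\<tau>*x^2) = 4*\<mu>/x^2" using t by simp
  have T1': "(2*\<mu>)/(x^2/2) = 4*\<mu>/x^2" by simp
  have t12: "12*\<mu>/x^2 = 3*(4*\<mu>/x^2)" by simp
  show ?thesis unfolding eq t12 by (rule comb[OF T1 T1' T2 T2' T3 T3'])
qed



lemma Gf_hasint:
  assumes t: "0 < \<tau>" and m: "0 \<le> \<mu>" and l: "0 < lam" "lam \<le> 1"
  shows "((\<lambda>t. gf lam \<mu> \<tau> t * sin (t * x)) has_integral Gf lam \<mu> \<tau> x) {-2*\<tau>..2*\<tau>}"
proof -
  have h: "((\<lambda>t. gf lam \<mu> \<tau> t * sin (t * x)) has_integral Gf lam \<mu> \<tau> x) UNIV"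
    unfolding Gf_def by (rule has_integral_integral_real[OF gsin_integrable[OF t m l]])
  have eq: "(\<lambda>t. gf lam \<mu> \<tau> t * sin (t * x)) = (\<lambda>t. if t \<in> {-2*\<tau>..2*\<tau>} then gf lam \<mu> \<tau> t * sin (t * x) else 0)"
  proof
    fix t show "gf lam \<mu> \<tau> t * sin (t * x) = (if t \<in> {-2*\<tau>..2*\<tau>} then gf lam \<mu> \<tau> t * sin (t * x) else 0)"
      using gf_zero[OF t, of t lam \<mu>] by (cases "t \<in> {-2*\<tau>..2*\<tau>}") simp_all
  qed
  have "((\<lambda>t. if t \<in> {-2*\<tau>..2*\<tau>} then gf lam \<mu> \<tau> t * sin (t * x) else 0) has_integral Gf lam \<mu> \<tau> x) UNIV"
    using h by (subst (asm) eq)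
  then show ?thesis by (rule has_integral_restrict_UNIV[THEN iffD1])
qed

lemma Gf_crude:
  assumes t: "0 < \<tau>" and m: "0 \<le> \<mu>" and l: "0 < lam" "lam \<le> 1"
  shows "\<bar>Gf lam \<mu> \<tau> x\<bar> \<le> 2 * ((1 - lam) / lam) * (\<tau> * \<mu>) * (4 * \<tau>)"
proof -
  have h: "((\<lambda>t. gf lam \<mu> \<tau> t * sin (t * x)) has_integral Gf lam \<mu> \<tau> x) (cbox (-2*\<tau>) (2*\<tau>))"
    using Gf_hasint[OF t m l] by simp
  have B: "0 \<le> 2 * ((1 - lam) / lam) * (\<tau> * \<mu>)" using t m l by auto
  have "norm (Gf lam \<mu> \<tau> x) \<le> 2 * ((1 - lam) / lam) * (\<tau> * \<mu>) * Henstock_Kurzweil_Integration.content (cbox (-2*\<tau>) (2*\<tau>))"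
  proof (rule has_integral_bound[OF B h])
    fix t
    have "\<bar>gf lam \<mu> \<tau> t * sin (t * x)\<bar> \<le> \<bar>gf lam \<mu> \<tau> t\<bar> * 1"
      unfolding abs_mult by (intro mult_left_mono) auto
    then show "norm (gf lam \<mu> \<tau> t * sin (t * x)) \<le> 2 * ((1 - lam) / lam) * (\<tau> * \<mu>)"
      using gf_bound[OF t m l, of t] by (simp del: abs_divide abs_mult)
  qed
  moreover have "Henstock_Kurzweil_Integration.content (cbox (-2*\<tau>) (2*\<tau>)) = 4*\<tau>"
    using t by (simp only: cbox_interval content_real)
  ultimately show ?thesis by (simp only: real_norm_def)
qed

lemma ftc_real:
  fixes F f :: "real \<Rightarrow> real"
  assumes "a \<le> b" "\<And>t. a \<le> t \<Longrightarrow> t \<le> b \<Longrightarrow> (F has_real_derivative f t) (at t)"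
  shows "(f has_integral F b - F a) {a..b}"
proof (rule fundamental_theorem_of_calculus[OF assms(1)])
  fix t :: real assume "t \<in> {a..b}"
  then have "(F has_real_derivative f t) (at t)" using assms(2) by auto
  then have "(F has_vector_derivative f t) (at t)"
    by (simp add: has_real_derivative_iff_has_vector_derivative)
  then show "(F has_vector_derivative f t) (at t within {a..b})"
    by (rule has_vector_derivative_at_within)
qed



lemma d_sin_lin: "c \<noteq> 0 \<Longrightarrow> ((\<lambda>u. sin (c*u)/c) has_real_derivative cos (c*u)) (at u)"
proof -
  assume c: "c \<noteq> 0"
  have "((\<lambda>u. sin (c*u)) has_real_derivative cos (c*u)*c) (at u)"
    by (auto intro!: derivative_eq_intros)
  from DERIV_cdivide[OF this, of c] show ?thesis using c by simp
qed
lemma d_lin_cos1: "x \<noteq> 0 \<Longrightarrow> ((\<lambda>u. -(a-u)*cos(u*x)/x - sin(u*x)/x^2) has_real_derivative (a-u) * sin(u*x)) (at u)"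
  by (auto intro!: derivative_eq_intros simp: field_simps power2_eq_square)
lemma d_lin_cos2: "x \<noteq> 0 \<Longrightarrow> ((\<lambda>u. -(a+u)*cos(u*x)/x + sin(u*x)/x^2) has_real_derivative (a+u) * sin(u*x)) (at u)"
  by (auto intro!: derivative_eq_intros simp: field_simps power2_eq_square)

lemma Gf_closed:
  assumes t: "0 < \<tau>" and m: "0 \<le> \<mu>" and l: "0 < lam" "lam \<le> 1"
    and x0: "x \<noteq> 0" and xm1: "x - \<mu> \<noteq> 0" and xm2: "x + \<mu> \<noteq> 0"
  shows "Gf lam \<mu> \<tau> x = 2 * ((1 - lam) / lam) *
     ((sin (\<tau>*x)*cos (\<tau>*\<mu>) - cos (\<tau>*x)* sin (\<tau>*\<mu>))/(x-\<mu>)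
      - (sin (\<tau>*x)*cos (\<tau>*\<mu>) + cos (\<tau>*x)* sin (\<tau>*\<mu>))/(x+\<mu>)
      + 2* sin (\<tau>*\<mu>)*cos (\<tau>*x)/x + 2* sin (\<tau>*\<mu>)*(sin (\<tau>*x) - sin (2*\<tau>*x))/(\<tau>*x^2))"
proof -
  define A where "A = 2 * ((1 - lam) / lam)"
  define q where "q = sin (\<tau>*\<mu>)"
  define f where "f = (\<lambda>t. gf lam \<mu> \<tau> t * sin (t * x))"
  define F1 where "F1 = (\<lambda>t. A/2*(sin((x-\<mu>)*t)/(x-\<mu>) - sin((x+\<mu>)*t)/(x+\<mu>)))"
  define F2 where "F2 = (\<lambda>t. A*q/\<tau>*(-(2*\<tau>-t)*cos(t*x)/x - sin(t*x)/x^2))"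
  define F3 where "F3 = (\<lambda>t. -(A*q/\<tau>)*(-(2*\<tau>+t)*cos(t*x)/x + sin(t*x)/x^2))"
  have I1: "(f has_integral F1 \<tau> - F1 (-\<tau>)) {-\<tau>..\<tau>}"
  proof (rule ftc_real)
    show "-\<tau> \<le> \<tau>" using t by simp
    fix u assume u: "-\<tau> \<le> u" "u \<le> \<tau>"
    have d: "(F1 has_real_derivative A/2*(cos((x-\<mu>)*u) - cos((x+\<mu>)*u))) (at u)"
      unfolding F1_def by (intro DERIV_cmult DERIV_diff d_sin_lin xm1 xm2)
    have g: "gf lam \<mu> \<tau> u = A * sin (u*\<mu>)"
      using u t unfolding gf_def A_def by (auto simp: sin_minus)
    have "A/2*(cos((x-\<mu>)*u) - cos((x+\<mu>)*u)) = f u"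
      unfolding f_def g by (simp add: left_diff_distrib distrib_right cos_diff cos_add algebra_simps)
    then show "(F1 has_real_derivative f u) (at u)" using d by simp
  qed
  have I2: "(f has_integral F2 (2*\<tau>) - F2 \<tau>) {\<tau>..2*\<tau>}"
  proof (rule ftc_real)
    show "\<tau> \<le> 2*\<tau>" using t by simp
    fix u assume u: "\<tau> \<le> u" "u \<le> 2*\<tau>"
    have d: "(F2 has_real_derivative A*q/\<tau>*((2*\<tau>-u)* sin(u*x))) (at u)"
      unfolding F2_def by (intro DERIV_cmult d_lin_cos1 x0)
    have g: "gf lam \<mu> \<tau> u = A * q * ((2*\<tau>-u)/\<tau>)"
      using u t unfolding gf_def A_def q_def by auto
    have "A*q/\<tau>*((2*\<tau>-u)* sin(u*x)) = f u"
      unfolding f_def g by simp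
    then show "(F2 has_real_derivative f u) (at u)" using d by simp
  qed
  have I3: "(f has_integral F3 (-\<tau>) - F3 (-2*\<tau>)) {-2*\<tau>..-\<tau>}"
  proof (rule ftc_real)
    show "-2*\<tau> \<le> -\<tau>" using t by simp
    fix u assume u: "-2*\<tau> \<le> u" "u \<le> -\<tau>"
    have d: "(F3 has_real_derivative -(A*q/\<tau>)*((2*\<tau>+u)* sin(u*x))) (at u)"
      unfolding F3_def by (intro DERIV_cmult d_lin_cos2 x0)
    have g: "gf lam \<mu> \<tau> u = -(A * q * ((2*\<tau>+u)/\<tau>))"
      using u t unfolding gf_def A_def q_def by auto
    have "-(A*q/\<tau>)*((2*\<tau>+u)* sin(u*x)) = f u"
      unfolding f_def g by simp
    then show "(F3 has_real_derivative f u) (at u)" using d by simp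
  qed
  have I13: "(f has_integral (F3 (-\<tau>) - F3 (-2*\<tau>)) + (F1 \<tau> - F1 (-\<tau>))) {-2*\<tau>..\<tau>}"
    by (rule has_integral_combine[OF _ _ I3 I1]) (use t in auto)
  have I123: "(f has_integral ((F3 (-\<tau>) - F3 (-2*\<tau>)) + (F1 \<tau> - F1 (-\<tau>))) + (F2 (2*\<tau>) - F2 \<tau>)) {-2*\<tau>..2*\<tau>}"
    by (rule has_integral_combine[OF _ _ I13 I2]) (use t in auto)
  have G: "Gf lam \<mu> \<tau> x = ((F3 (-\<tau>) - F3 (-2*\<tau>)) + (F1 \<tau> - F1 (-\<tau>))) + (F2 (2*\<tau>) - F2 \<tau>)"
    using has_integral_unique[OF Gf_hasint[OF t m l, of x] I123[unfolded f_def]] .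
  define S where "S = sin (\<tau>*x)"
  define C where "C = cos (\<tau>*x)"
  define c where "c = cos (\<tau>*\<mu>)"
  define S2 where "S2 = sin (2*\<tau>*x)"
  have sa: "sin ((x-\<mu>)*\<tau>) = S*c - C*q"
  proof -
    have e: "(x-\<mu>)*\<tau> = \<tau>*x - \<tau>*\<mu>" by (simp add: algebra_simps)
    show ?thesis unfolding S_def C_def c_def q_def e sin_diff by simp
  qed
  have sb: "sin ((x+\<mu>)*\<tau>) = S*c + C*q"
  proof -
    have e: "(x+\<mu>)*\<tau> = \<tau>*x + \<tau>*\<mu>" by (simp add: algebra_simps)
    show ?thesis unfolding S_def C_def c_def q_def e sin_add by simp
  qed
  have E1: "F1 \<tau> - F1 (-\<tau>) = A*((S*c - C*q)/(x-\<mu>) - (S*c + C*q)/(x+\<mu>))"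
  proof -
    have sa': "sin((x-\<mu>)*(-\<tau>)) = - (S*c - C*q)" unfolding sa[symmetric] by (simp only: mult_minus_right sin_minus)
    have sb': "sin((x+\<mu>)*(-\<tau>)) = - (S*c + C*q)" unfolding sb[symmetric] by (simp only: mult_minus_right sin_minus)
    have "F1 \<tau> - F1 (-\<tau>) = A/2*(sin((x-\<mu>)*\<tau>)/(x-\<mu>) - sin((x+\<mu>)*\<tau>)/(x+\<mu>))
        - A/2*(sin((x-\<mu>)*(-\<tau>))/(x-\<mu>) - sin((x+\<mu>)*(-\<tau>))/(x+\<mu>))"
      by (simp only: F1_def)
    also have "\<dots> = A/2*((S*c - C*q)/(x-\<mu>) - (S*c + C*q)/(x+\<mu>))
        - A/2*((-(S*c - C*q))/(x-\<mu>) - (-(S*c + C*q))/(x+\<mu>))"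
      by (simp only: sa sb sa' sb')
    also have "\<dots> = A*((S*c - C*q)/(x-\<mu>) - (S*c + C*q)/(x+\<mu>))"
    proof -
      have "A/2*(a - b) - A/2*(-a - -b) = A*(a - b)" for a b :: real by (simp add: field_simps)
      from this[of "(S*c - C*q)/(x-\<mu>)" "(S*c + C*q)/(x+\<mu>)"] show ?thesis by (simp only: minus_divide_left)
    qed
    finally show ?thesis .
  qed
  have E2: "F2 (2*\<tau>) - F2 \<tau> = A*q*C/x + A*q*(S-S2)/(\<tau>*x^2)"
    unfolding F2_def S_def C_def S2_def using t x0 by (simp add: field_simps mult.commute)
  have E3: "F3 (-\<tau>) - F3 (-2*\<tau>) = A*q*C/x + A*q*(S-S2)/(\<tau>*x^2)"
    unfolding F3_def S_def C_def S2_def using t x0 by (simp add: field_simps mult.commute sin_minus)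
  show ?thesis unfolding G E1 E2 E3 A_def[symmetric] q_def[symmetric] S_def[symmetric] C_def[symmetric]
      c_def[symmetric] S2_def[symmetric]
    by (simp add: algebra_simps)
qed



lemma Gf_meas: "Gf lam \<mu> \<tau> \<in> borel_measurable lborel"
proof -
  have "(\<lambda>(x, t). gf lam \<mu> \<tau> t * sin (t * x)) \<in> borel_measurable (lborel \<Otimes>\<^sub>M lborel)"
    by measurable
  then have "(\<lambda>x. LINT t|lborel. gf lam \<mu> \<tau> t * sin (t * x)) \<in> borel_measurable lborel"
    by (rule lborel.borel_measurable_lebesgue_integral[of "\<lambda>x t. gf lam \<mu> \<tau> t * sin (t * x)", simplified])
  then show ?thesis unfolding Gf_def[abs_def] .
qed

lemma Gf_odd: "Gf lam \<mu> \<tau> (-x) = - Gf lam \<mu> \<tau> x"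
  unfolding Gf_def by simp

lemma Gf_int_zero:
  assumes "integrable lborel (Gf lam \<mu> \<tau>)"
  shows "(LINT x|lborel. Gf lam \<mu> \<tau> x) = 0"
proof -
  have "(LINT x|lborel. Gf lam \<mu> \<tau> x) = (LINT x|lborel. Gf lam \<mu> \<tau> (-x))"
    using lborel_integral_real_affine[of "-1" "Gf lam \<mu> \<tau>" 0] by simp
  also have "\<dots> = - (LINT x|lborel. Gf lam \<mu> \<tau> x)" unfolding Gf_odd by simp
  finally show ?thesis by simp
qed



lemma Gf_bound_p0:
  assumes l: "0 < lam" "lam \<le> 1/2" and t: "0 < \<tau>" and mu: "\<mu> = (1/100) * lam / \<tau>"
  shows "\<bar>Gf lam \<mu> \<tau> x\<bar> \<le> 2 * pi * p0 \<tau> x"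
proof -
  have l1: "lam \<le> 1" using l by simp
  have m: "0 \<le> \<mu>" using mu l t by simp
  have tm: "\<tau> * \<mu> = lam / 100" using mu t by simp
  define A where "A = 2 * ((1 - lam) / lam)"
  have A0: "0 \<le> A" using l by (simp add: A_def)
  have Atm: "A * (\<tau> * \<mu>) \<le> 1/50" using l unfolding tm A_def by (simp add: field_simps)
  have Am: "A * \<mu> \<le> 1 / (50 * \<tau>)" using Atm t by (simp add: field_simps)
  have pi3: "3 < pi" by (rule pi_gt3)
  show ?thesis
  proof (cases "\<bar>x\<bar> \<le> 1 / \<tau>")
    case True
    then have p: "p0 \<tau> x = \<tau>/4" by (simp add: p0_def)
    have "\<bar>Gf lam \<mu> \<tau> x\<bar> \<le> A * (\<tau> * \<mu>) * (4 * \<tau>)"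
      using Gf_crude[OF t m l(1) l1, of x] by (simp add: A_def)
    also have "\<dots> \<le> 1/50 * (4 * \<tau>)" using Atm t by (intro mult_right_mono) auto
    also have "\<dots> \<le> 2 * pi * (\<tau>/4)" using pi3 t by simp
    finally show ?thesis unfolding p .
  next
    case False
    then have xt: "1 < \<bar>x\<bar> * \<tau>" using t by (simp add: field_simps)
    have p: "p0 \<tau> x = 1 / (4 * \<tau> * x^2)" using False by (simp add: p0_def)
    have x0: "x \<noteq> 0" using xt by auto
    have mx: "\<mu> < \<bar>x\<bar>"
    proof -
      have "\<mu> * \<tau> < \<bar>x\<bar> * \<tau>" using tm l xt by (simp add: mult.commute)
      then show ?thesis using t by simp
    qed
    have xm1: "x - \<mu> \<noteq> 0" and xm2: "x + \<mu> \<noteq> 0" using mx m by auto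
    have tm': "\<tau> * \<mu> \<le> 1/100" using tm l by simp
    have bs: "\<bar>sin (\<tau> * \<mu>)\<bar> \<le> \<tau> * \<mu>" using abs_sin_x_le_abs_x[of "\<tau>*\<mu>"] t m by simp
    have E: "\<bar>(sin (\<tau>*x)*cos (\<tau>*\<mu>) - cos (\<tau>*x)* sin (\<tau>*\<mu>))/(x-\<mu>)
      - (sin (\<tau>*x)*cos (\<tau>*\<mu>) + cos (\<tau>*x)* sin (\<tau>*\<mu>))/(x+\<mu>)
      + 2* sin (\<tau>*\<mu>)*cos (\<tau>*x)/x + 2* sin (\<tau>*\<mu>)*(sin (\<tau>*x) - sin (2*\<tau>*x))/(\<tau>*x^2)\<bar> \<le> 12*\<mu>/x^2"
      by (rule bound_alg[OF t m tm' xt]) (use bs in auto)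
    have "\<bar>Gf lam \<mu> \<tau> x\<bar> \<le> A * (12*\<mu>/x^2)"
      unfolding Gf_closed[OF t m l(1) l1 x0 xm1 xm2] A_def[symmetric] abs_mult
      using E A0 by (intro mult_mono) auto
    also have "\<dots> = 12 * (A * \<mu>) / x^2" by simp
    also have "\<dots> \<le> 12 * (1 / (50 * \<tau>)) / x^2"
      using Am x0 by (intro divide_right_mono mult_left_mono) auto
    also have "\<dots> \<le> 2 * pi * (1 / (4 * \<tau> * x^2))"
      using pi3 t x0 by (simp add: field_simps)
    finally show ?thesis unfolding p .
  qed
qed

theorem mainTheorem13:
  shows "\<exists>c0::real. 0 < c0 \<and> c0 < 1 \<and>
    (\<forall>lam \<tau> :: real. 0 < lam \<longrightarrow> lam \<le> 1/2 \<longrightarrow> 0 < \<tau> \<longrightarrow>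
      (let \<mu> = c0 * lam / \<tau> in
        (\<forall>x. Im (Delta lam \<mu> \<tau> x) = 0) \<and>
        is_prob_density (\<lambda>x. p0 \<tau> x + Re (Delta lam \<mu> \<tau> x))))"
proof (intro exI[of _ "1/100"] conjI allI impI)
  fix lam \<tau> :: real
  assume l: "0 < lam" "lam \<le> 1/2" and t: "0 < \<tau>"
  define \<mu> where "\<mu> = (1/100) * lam / \<tau>"
  have l1: "lam \<le> 1" using l by simp
  have m: "0 \<le> \<mu>" using l t by (simp add: \<mu>_def)
  have D: "Delta lam \<mu> \<tau> x = complex_of_real (- Gf lam \<mu> \<tau> x / (2 * pi))" for x
    unfolding Delta_def fourier_eq[OF t m l(1) l1] by simp
  have B: "\<bar>Gf lam \<mu> \<tau> x\<bar> \<le> 2 * pi * p0 \<tau> x" for x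
    by (rule Gf_bound_p0[OF l t \<mu>_def])
  have p0i: "integrable lborel (p0 \<tau>)" and p0I: "(LINT x|lborel. p0 \<tau> x) = 1"
    using p0_bochner[OF t] by (auto simp: has_bochner_integral_iff)
  have Gi: "integrable lborel (Gf lam \<mu> \<tau>)"
  proof (rule Bochner_Integration.integrable_bound[of _ "\<lambda>x. 2 * pi * p0 \<tau> x"])
    show "integrable lborel (\<lambda>x. 2 * pi * p0 \<tau> x)" using p0i by simp
    show "Gf lam \<mu> \<tau> \<in> borel_measurable lborel" by (rule Gf_meas)
    show "AE x in lborel. norm (Gf lam \<mu> \<tau> x) \<le> norm (2 * pi * p0 \<tau> x)"
      using B p0_nonneg[OF t] by (auto intro!: AE_I2 simp: abs_mult)
  qed
  have G0: "(LINT x|lborel. Gf lam \<mu> \<tau> x) = 0" by (rule Gf_int_zero[OF Gi])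
  have eqf: "(\<lambda>x. p0 \<tau> x + Re (Delta lam \<mu> \<tau> x)) = (\<lambda>x. p0 \<tau> x + (- Gf lam \<mu> \<tau> x / (2 * pi)))"
    unfolding D by simp
  show "let \<mu>' = 1/100 * lam / \<tau> in (\<forall>x. Im (Delta lam \<mu>' \<tau> x) = 0) \<and>
        is_prob_density (\<lambda>x. p0 \<tau> x + Re (Delta lam \<mu>' \<tau> x))"
    unfolding Let_def \<mu>_def[symmetric]
  proof (intro conjI allI)
    fix x show "Im (Delta lam \<mu> \<tau> x) = 0" unfolding D by simp
  next
    show "is_prob_density (\<lambda>x. p0 \<tau> x + Re (Delta lam \<mu> \<tau> x))"
      unfolding is_prob_density_def eqf
    proof (intro conjI allI)
      fix x
      have "\<bar>Gf lam \<mu> \<tau> x\<bar> / (2 * pi) \<le> p0 \<tau> x" using B[of x] by (simp add: field_simps)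
      moreover have "\<bar>Gf lam \<mu> \<tau> x / (2 * pi)\<bar> = \<bar>Gf lam \<mu> \<tau> x\<bar> / (2 * pi)" by simp
      moreover have "- Gf lam \<mu> \<tau> x / (2 * pi) = - (Gf lam \<mu> \<tau> x / (2 * pi))" by simp
      ultimately show "0 \<le> p0 \<tau> x + - Gf lam \<mu> \<tau> x / (2 * pi)" by linarith
    next
      show "integrable lborel (\<lambda>x. p0 \<tau> x + - Gf lam \<mu> \<tau> x / (2 * pi))"
        using p0i Gi by simp
      have "(LINT x|lborel. p0 \<tau> x + - Gf lam \<mu> \<tau> x / (2 * pi))
          = (LINT x|lborel. p0 \<tau> x) + (LINT x|lborel. - Gf lam \<mu> \<tau> x / (2 * pi))"
        using p0i Gi by (intro Bochner_Integration.integral_add) auto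
      also have "(LINT x|lborel. - Gf lam \<mu> \<tau> x / (2 * pi)) = - (LINT x|lborel. Gf lam \<mu> \<tau> x) / (2 * pi)"
        by simp
      finally show "(LINT x|lborel. p0 \<tau> x + - Gf lam \<mu> \<tau> x / (2 * pi)) = 1"
        using p0I G0 by simp
    qed
  qed
qed simp_all

end
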